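(* Let $(X,d)$ be a compact metric space, $f_{1,\infty}$ a sequence of continuous self-maps of $X$ and $m\ge2$. If $(\mathcal{M}(X),\widetilde{f}_{1,\infty})$ is weakly mixing of order $m$, then $(X,f_{1,\infty})$ is weakly mixing of order $m$.
   Context: For $f_{1,\infty}=\{f_n\}_{n\ge1}$ write $f_1^n=f_n\circ\cdots\circ f_1$. $\mathcal{M}(X)$ is the space of Borel probability measures on $X$ with the weak$^*$ topology, and $\widetilde{f}_1^n(\mu)(A)=\mu((f_1^n)^{-1}(A))$ for Borel $A$. A non-autonomous system $(Y,g_{1,\infty})$ is weakly mixing of order $m$ ($m\ge2$) if for any non-empty open sets $U_1,\dots,U_m,V_1,\dots,V_m\subseteq Y$ there is $n\in\mathbb{N}$ with $g_1^n(U_i)\cap V_i\neq\emptyset$ for all $1\le i\le m$. *)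

theory Defs
  imports "HOL-Probability.Probability"
begin

text \<open>Non-autonomous composition: nacomp f n = f n o ... o f 1 (f 0 is unused; nacomp f 0 = id).\<close>
primrec nacomp :: "(nat \<Rightarrow> 'b \<Rightarrow> 'b) \<Rightarrow> nat \<Rightarrow> 'b \<Rightarrow> 'b" where
  "nacomp f 0 = id"
| "nacomp f (Suc n) = f (Suc n) \<circ> nacomp f n"

definition weakly_mixing_order :: "'b topology \<Rightarrow> (nat \<Rightarrow> 'b \<Rightarrow> 'b) \<Rightarrow> nat \<Rightarrow> bool" where
  "weakly_mixing_order T g m \<longleftrightarrow>
     (\<forall>U V :: nat \<Rightarrow> 'b set.
        (\<forall>i\<in>{1..m}. openin T (U i) \<and> U i \<noteq> {} \<and> openin T (V i) \<and> V i \<noteq> {}) \<longrightarrow>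
        (\<exists>n\<ge>1. \<forall>i\<in>{1..m}. nacomp g n ` U i \<inter> V i \<noteq> {}))"

text \<open>The space M(X) of Borel probability measures on X (here X is the whole type).\<close>
definition prob_measures :: "'a::topological_space measure set" where
  "prob_measures = {\<mu>. prob_space \<mu> \<and> sets \<mu> = sets borel}"

definition weak_star_topology :: "'a::topological_space measure topology" where
  "weak_star_topology = topology (generate_topology_on
     {{\<mu> \<in> prob_measures. integral\<^sup>L \<mu> g \<in> W} | g W. continuous_on UNIV g \<and> open (W :: real set)})"

definition induced_map :: "('a::topological_space \<Rightarrow> 'a) \<Rightarrow> 'a measure \<Rightarrow> 'a measure" where
  "induced_map h \<mu> = distr \<mu> borel h"

end

theory Submission
  imports Defs
begin

lemma nacomp_cont:
  assumes "\<And>n. continuous_on UNIV (f n)"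
  shows "continuous_on UNIV (nacomp f n)"
proof (induction n)
  case (Suc n)
  have "continuous_on (range (nacomp f n)) (f (Suc n))"
    using assms continuous_on_subset subset_UNIV by blast
  then show ?case using continuous_on_compose[OF Suc] by simp
qed (simp add: id_def)

lemma nacomp_induced:
  fixes f :: "nat \<Rightarrow> 'a::metric_space \<Rightarrow> 'a"
  assumes "\<And>n. continuous_on UNIV (f n)" and "sets \<mu> = sets borel"
  shows "nacomp (\<lambda>n. induced_map (f n)) n \<mu> = distr \<mu> borel (nacomp f n)"
proof (induction n)
  case 0
  have "distr \<mu> borel (\<lambda>x. x) = \<mu>" by (rule distr_id2) (use assms(2) in simp)
  then show ?case by (simp add: id_def)
next
  case (Suc n)
  have m1: "nacomp f n \<in> measurable \<mu> borel"
    unfolding measurable_cong_sets[OF assms(2) refl]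
    by (rule borel_measurable_continuous_onI[OF nacomp_cont[OF assms(1)]])
  have m2: "f (Suc n) \<in> measurable borel borel"
    using borel_measurable_continuous_onI[OF assms(1)] .
  have "nacomp (\<lambda>n. induced_map (f n)) (Suc n) \<mu> = distr (distr \<mu> borel (nacomp f n)) borel (f (Suc n))"
    by (simp only: nacomp.simps o_apply Suc) (simp add: induced_map_def)
  also have "\<dots> = distr \<mu> borel (f (Suc n) \<circ> nacomp f n)" by (rule distr_distr[OF m2 m1])
  finally show ?case by (simp only: nacomp.simps)
qed

definition bump :: "'a::metric_space \<Rightarrow> real \<Rightarrow> 'a \<Rightarrow> real" where
  "bump x r y = max 0 (1 - dist y x / r)"

lemma bump_cont: "continuous_on UNIV (bump x r)"
  unfolding bump_def divide_inverse by (intro continuous_intros)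

lemma bump_bounds: "0 \<le> bump x r y" "bump x r y \<le> 1" if "r > 0"
  using that by (auto simp: bump_def)

lemma bump_norm: "r > 0 \<Longrightarrow> norm (bump x r y) \<le> 1"
  using bump_bounds[of r x y] by simp

lemma bump_pos: assumes "r > 0" "bump x r y > 0" shows "y \<in> ball x r"
proof -
  have "dist y x / r < 1" using assms(2) by (simp add: bump_def)
  then have "dist y x < r" using assms(1) by (simp add: divide_less_eq_1_pos)
  then show ?thesis by (simp add: mem_ball dist_commute)
qed

lemma bump_center: "r > 0 \<Longrightarrow> bump x r x = 1"
  by (simp add: bump_def)

lemma open_gen:
  assumes "continuous_on UNIV g"
  shows "openin weak_star_topology {\<mu> \<in> prob_measures. integral\<^sup>L \<mu> g \<in> {(1::real)/2<..}}"
proof -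
  have "{\<mu> \<in> prob_measures. integral\<^sup>L \<mu> g \<in> {(1::real)/2<..}} \<in>
     {{\<mu> \<in> prob_measures. integral\<^sup>L \<mu> g \<in> W} | g W. continuous_on UNIV g \<and> open (W :: real set)}"
    using assms open_greaterThan[of "(1::real)/2"] by blast
  then show ?thesis unfolding weak_star_topology_def openin_topology_generated_by_iff
    by (rule generate_topology_on.Basis)
qed

lemma half_aux: "(a::real) + b \<le> 1 \<Longrightarrow> 1/2 < a \<Longrightarrow> 1/2 < b \<Longrightarrow> False"
  by linarith

lemma key:
  fixes F :: "'a::metric_space \<Rightarrow> 'a"
  assumes "prob_space \<mu>" "sets \<mu> = sets borel" "continuous_on UNIV F"
    and "rx > 0" "ry > 0"
    and "integral\<^sup>L \<mu> (bump x rx) > 1/2"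
    and "integral\<^sup>L (distr \<mu> borel F) (bump y ry) > 1/2"
  shows "\<exists>z. z \<in> ball x rx \<and> F z \<in> ball y ry"
proof (rule ccontr)
  assume nz: "\<not> ?thesis"
  interpret prob_space \<mu> by fact
  have mF: "F \<in> measurable \<mu> borel"
    unfolding measurable_cong_sets[OF assms(2) refl] by (rule borel_measurable_continuous_onI[OF assms(3)])
  have mb: "bump y ry \<in> borel_measurable borel" "bump x rx \<in> borel_measurable borel"
    by (auto intro: borel_measurable_continuous_onI bump_cont)
  have mbx: "bump x rx \<in> borel_measurable \<mu>"
    unfolding measurable_cong_sets[OF assms(2) refl] by (rule mb(2))
  have mby: "(\<lambda>z. bump y ry (F z)) \<in> borel_measurable \<mu>"
    using measurable_comp[OF mF mb(1)] by (simp add: o_def)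
  have i1: "integrable \<mu> (bump x rx)"
    by (rule integrable_const_bound[where B=1, OF AE_I2[OF bump_norm[OF assms(4)]] mbx])
  have i2: "integrable \<mu> (\<lambda>z. bump y ry (F z))"
    by (rule integrable_const_bound[where B=1, OF AE_I2[OF bump_norm[OF assms(5)]] mby])
  have eq: "integral\<^sup>L (distr \<mu> borel F) (bump y ry) = integral\<^sup>L \<mu> (\<lambda>z. bump y ry (F z))"
    using integral_distr[OF mF mb(1)] .
  have le: "bump x rx z + bump y ry (F z) \<le> 1" for z
  proof -
    have "\<not> (bump x rx z > 0 \<and> bump y ry (F z) > 0)"
    proof
      assume a: "bump x rx z > 0 \<and> bump y ry (F z) > 0"
      have "z \<in> ball x rx" using a bump_pos[OF assms(4)] by blast
      moreover have "F z \<in> ball y ry" using a bump_pos[OF assms(5)] by blast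
      ultimately show False using nz by blast
    qed
    moreover have "bump x rx z \<ge> 0" "bump x rx z \<le> 1" "bump y ry (F z) \<ge> 0" "bump y ry (F z) \<le> 1"
      using bump_bounds[OF assms(4), of x z] bump_bounds[OF assms(5), of y "F z"] by auto
    ultimately show ?thesis by linarith
  qed
  have A: "integral\<^sup>L \<mu> (\<lambda>z. bump x rx z + bump y ry (F z)) \<le> integral\<^sup>L \<mu> (\<lambda>z. 1)"
    by (rule integral_mono[OF Bochner_Integration.integrable_add[OF i1 i2] integrable_const le])
  have B: "integral\<^sup>L \<mu> (\<lambda>z. 1::real) = 1"
    by (simp add: measure_eq_emeasure_eq_ennreal emeasure_space_1)
  have C: "integral\<^sup>L \<mu> (\<lambda>z. bump x rx z + bump y ry (F z)) = integral\<^sup>L \<mu> (bump x rx) + integral\<^sup>L \<mu> (\<lambda>z. bump y ry (F z))"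
    by (rule Bochner_Integration.integral_add[OF i1 i2])
  have D: "integral\<^sup>L \<mu> (bump x rx) + integral\<^sup>L \<mu> (\<lambda>z. bump y ry (F z)) \<le> 1"
    using A unfolding B C .
  have E: "1/2 < integral\<^sup>L \<mu> (\<lambda>z. bump y ry (F z))"
    using assms(7) unfolding eq .
  show False by (rule half_aux[OF D assms(6) E])
qed


theorem mainTheorem4:
  fixes f :: "nat \<Rightarrow> 'a::metric_space \<Rightarrow> 'a" and m :: nat
  assumes "compact (UNIV :: 'a set)"
    and "\<And>n. continuous_on UNIV (f n)"
    and "m \<ge> 2"
    and "weakly_mixing_order weak_star_topology (\<lambda>n. induced_map (f n)) m"
  shows "weakly_mixing_order euclidean f m"
  unfolding weakly_mixing_order_def
proof (intro allI impI)
  fix U V :: "nat \<Rightarrow> 'a set"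
  assume H: "\<forall>i\<in>{1..m}. openin euclidean (U i) \<and> U i \<noteq> {} \<and> openin euclidean (V i) \<and> V i \<noteq> {}"
  have "\<forall>i. \<exists>x r. i \<in> {1..m} \<longrightarrow> r > 0 \<and> ball x r \<subseteq> U i"
  proof
    fix i show "\<exists>x r. i \<in> {1..m} \<longrightarrow> r > 0 \<and> ball x r \<subseteq> U i"
    proof (cases "i \<in> {1..m}")
      case True
      then have "open (U i)" "U i \<noteq> {}" using H by auto
      then obtain x where "x \<in> U i" by blast
      then obtain r where "r > 0" "ball x r \<subseteq> U i" using open_contains_ball \<open>open (U i)\<close> by blast
      then show ?thesis by blast
    qed auto
  qed
  then obtain xu ru where U: "\<And>i. i \<in> {1..m} \<Longrightarrow> ru i > 0 \<and> ball (xu i) (ru i) \<subseteq> U i"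
    by metis
  have "\<forall>i. \<exists>x r. i \<in> {1..m} \<longrightarrow> r > 0 \<and> ball x r \<subseteq> V i"
  proof
    fix i show "\<exists>x r. i \<in> {1..m} \<longrightarrow> r > 0 \<and> ball x r \<subseteq> V i"
    proof (cases "i \<in> {1..m}")
      case True
      then have "open (V i)" "V i \<noteq> {}" using H by auto
      then obtain x where "x \<in> V i" by blast
      then obtain r where "r > 0" "ball x r \<subseteq> V i" using open_contains_ball \<open>open (V i)\<close> by blast
      then show ?thesis by blast
    qed auto
  qed
  then obtain xv rv where V: "\<And>i. i \<in> {1..m} \<Longrightarrow> rv i > 0 \<and> ball (xv i) (rv i) \<subseteq> V i"
    by metis
  define UU where "UU i = {\<mu> \<in> prob_measures. integral\<^sup>L \<mu> (bump (xu i) (ru i)) \<in> {(1::real)/2<..}}" for i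
  define VV where "VV i = {\<mu> \<in> prob_measures. integral\<^sup>L \<mu> (bump (xv i) (rv i)) \<in> {(1::real)/2<..}}" for i
  have dirac: "return borel x \<in> prob_measures" for x :: 'a
    by (simp add: prob_measures_def prob_space_return)
  have ne: "integral\<^sup>L (return borel x) (bump x r) \<in> {(1::real)/2<..}" if "r > 0" for x :: 'a and r
  proof -
    have "integral\<^sup>L (return borel x) (bump x r) = bump x r x"
      by (rule integral_return) (auto intro: borel_measurable_continuous_onI bump_cont)
    then show ?thesis using bump_center[OF that, of x] by simp
  qed
  have "\<forall>i\<in>{1..m}. openin weak_star_topology (UU i) \<and> UU i \<noteq> {} \<and> openin weak_star_topology (VV i) \<and> VV i \<noteq> {}"
  proof
    fix i assume i: "i \<in> {1..m}"
    show "openin weak_star_topology (UU i) \<and> UU i \<noteq> {} \<and> openin weak_star_topology (VV i) \<and> VV i \<noteq> {}"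
    proof (intro conjI)
      show "openin weak_star_topology (UU i)" unfolding UU_def by (rule open_gen[OF bump_cont])
      show "openin weak_star_topology (VV i)" unfolding VV_def by (rule open_gen[OF bump_cont])
      have "return borel (xu i) \<in> UU i" unfolding UU_def
        using dirac[of "xu i"] ne[of "ru i" "xu i"] U[OF i] by simp
      then show "UU i \<noteq> {}" by blast
      have "return borel (xv i) \<in> VV i" unfolding VV_def
        using dirac[of "xv i"] ne[of "rv i" "xv i"] V[OF i] by simp
      then show "VV i \<noteq> {}" by blast
    qed
  qed
  then have "\<exists>n\<ge>1. \<forall>i\<in>{1..m}. nacomp (\<lambda>n. induced_map (f n)) n ` UU i \<inter> VV i \<noteq> {}"
    by (rule assms(4)[unfolded weakly_mixing_order_def, THEN spec, THEN spec, THEN mp])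
  then obtain n where n: "n \<ge> 1"
    and hit: "\<forall>i\<in>{1..m}. nacomp (\<lambda>n. induced_map (f n)) n ` UU i \<inter> VV i \<noteq> {}"
    by blast
  show "\<exists>n\<ge>1. \<forall>i\<in>{1..m}. nacomp f n ` U i \<inter> V i \<noteq> {}"
  proof (intro exI[of _ n] conjI ballI n)
    fix i assume i: "i \<in> {1..m}"
    obtain \<mu> where mu: "\<mu> \<in> UU i" "nacomp (\<lambda>n. induced_map (f n)) n \<mu> \<in> VV i"
      using hit i by blast
    have ps: "prob_space \<mu>" "sets \<mu> = sets borel" using mu(1) by (auto simp: UU_def prob_measures_def)
    have "\<exists>z. z \<in> ball (xu i) (ru i) \<and> nacomp f n z \<in> ball (xv i) (rv i)"
    proof (rule key[OF ps nacomp_cont[OF assms(2)]])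
      show "ru i > 0" "rv i > 0" using U[OF i] V[OF i] by auto
      show "1/2 < integral\<^sup>L \<mu> (bump (xu i) (ru i))" using mu(1) by (simp add: UU_def)
      have "integral\<^sup>L (nacomp (\<lambda>n. induced_map (f n)) n \<mu>) (bump (xv i) (rv i)) > 1/2"
        using mu(2) by (simp add: VV_def)
      then show "1/2 < integral\<^sup>L (distr \<mu> borel (nacomp f n)) (bump (xv i) (rv i))"
        by (simp only: nacomp_induced[OF assms(2) ps(2)])
    qed
    then obtain z where z: "z \<in> ball (xu i) (ru i)" "nacomp f n z \<in> ball (xv i) (rv i)" by blast
    then have "z \<in> U i" "nacomp f n z \<in> V i" using U[OF i] V[OF i] by auto
    then show "nacomp f n ` U i \<inter> V i \<noteq> {}" by blast
  qed
qed

end
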